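(* Consider the single-task linear bandit: at each round $t=1,\dots,N$ the agent chooses $x_t\in\mathcal A:=\{x\in\mathbb{R}^d:\|x\|\le1\}$ and observes $y_t=x_t^\top\theta+\eta_t$, where the $\eta_t$ are independent, zero-mean, $1$-sub-Gaussian, $\phi_{\min}\le\|\theta\|\le\phi_{\max}$ for positive constants $\phi_{\min},\phi_{\max}$, and $\theta=B\alpha$ for some unknown $B\in\mathbb{R}^{d\times r}$ with orthonormal columns and some $\alpha\in\mathbb{R}^r$. Let $\hat B\in\mathbb{R}^{d\times r}$ (with orthonormal columns) be an estimate of $B$ satisfying $\|\hat B^\top B_\perp\|_F\le\varepsilon$. Suppose the agent plays the Representation Transfer (RT) algorithm with input $\hat B$: with $N_2=\lceil r\sqrt N\rceil$ and $[a'_1,\dots,a'_r]$ an orthonormal basis of $\mathrm{span}(\hat B)$, for $t=1,\dots,N_2$ it takes $x_t=a'_i$ with $i=((t-1)\bmod r)+1$; it then computes $\hat\alpha=(\hat B^\top X\,X^\top\hat B)^{-1}\hat B^\top X Y$ with $X=[x_1,\dots,x_{N_2}]$, $Y=[y_1,\dots,y_{N_2}]^\top$, sets $\hat\theta=\hat B\hat\alpha$, and for $t=N_2+1,\dots,N$ takes $x_t=\arg\max_{x\in\mathcal A}x^\top\hat\theta$. Then the regret $R_N=\sum_{t=1}^N(x^*-x_t)^\top\theta$, with $x^*\in\arg\max_{x\in\mathcal A}x^\top\theta$, satisfies $$\mathbb{E}R_N=O\big(r\sqrt N+N\varepsilon^2\big).$$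
   Context: For a matrix $A$, $A_\perp$ denotes a matrix with orthonormal columns spanning the orthogonal complement of $\mathrm{span}(A)$, and $\|\cdot\|_F$ is the Frobenius norm. $\lceil x\rceil$ denotes the ceiling. $f=O(g)$ means $f\le Mg$ for some constant $M>0$ and all sufficiently large arguments; here the implicit constant does not depend on $N$ or $\varepsilon$. *)

theory Defs
  imports "HOL-Probability.Probability"
begin

definition outer :: "real^'n \<Rightarrow> real^'m \<Rightarrow> real^'m^'n" where
  "outer u v = (\<chi> i j. u $ i * v $ j)"

definition rt_N2 :: "nat \<Rightarrow> nat \<Rightarrow> nat" where
  "rt_N2 r N = nat \<lceil>real r * sqrt (real N)\<rceil>"

text \<open>Exploration action at round t (t = 1..N2): the basis vector a'_i with
  i = ((t-1) mod r)+1; the basis is indexed 0..r-1 here, so a' is a ((t-1) mod r).\<close>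
definition rt_explore :: "nat \<Rightarrow> (nat \<Rightarrow> real^'d) \<Rightarrow> nat \<Rightarrow> real^'d" where
  "rt_explore r a t = a ((t - 1) mod r)"

text \<open>theta_hat = Bh (Bh^T X X^T Bh)^{-1} Bh^T X Y, with X X^T and X Y written
  out as sums over the N2 exploration rounds; y t is the observation of round t.\<close>
definition rt_theta_hat ::
  "real^'r^'d \<Rightarrow> (nat \<Rightarrow> real^'d) \<Rightarrow> nat \<Rightarrow> (nat \<Rightarrow> real) \<Rightarrow> real^'d" where
  "rt_theta_hat Bh a N2 y =
     (let r = CARD('r);
          G = (\<Sum>t\<in>{1..N2}. outer (transpose Bh *v rt_explore r a t)
                                     (transpose Bh *v rt_explore r a t));
          b = (\<Sum>t\<in>{1..N2}. y t *\<^sub>R (transpose Bh *v rt_explore r a t))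
      in Bh *v (matrix_inv G *v b))"

text \<open>Action of RT at round t of a horizon-N run, given a realisation eta of the
  noise sequence; sel is the (argmax) selection rule used in the exploitation phase.\<close>
definition rt_action ::
  "real^'r^'d \<Rightarrow> (nat \<Rightarrow> real^'d) \<Rightarrow> (real^'d \<Rightarrow> real^'d) \<Rightarrow> real^'d
    \<Rightarrow> (nat \<Rightarrow> real) \<Rightarrow> nat \<Rightarrow> nat \<Rightarrow> real^'d" where
  "rt_action Bh a sel \<theta> \<eta> N t =
     (let r = CARD('r); N2 = rt_N2 r N
      in if t \<le> N2 then rt_explore r a t
         else sel (rt_theta_hat Bh a N2 (\<lambda>s. rt_explore r a s \<bullet> \<theta> + \<eta> s)))"

definition rt_regret ::
  "real^'r^'d \<Rightarrow> (nat \<Rightarrow> real^'d) \<Rightarrow> (real^'d \<Rightarrow> real^'d) \<Rightarrow> real^'d \<Rightarrow> real^'d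
    \<Rightarrow> (nat \<Rightarrow> real) \<Rightarrow> nat \<Rightarrow> real" where
  "rt_regret Bh a sel \<theta> xstar \<eta> N =
     (\<Sum>t\<in>{1..N}. (xstar - rt_action Bh a sel \<theta> \<eta> N t) \<bullet> \<theta>)"

definition subgaussian1 :: "'a measure \<Rightarrow> ('a \<Rightarrow> real) \<Rightarrow> bool" where
  "subgaussian1 Pr X \<longleftrightarrow>
     (\<forall>l::real. integrable Pr (\<lambda>\<omega>. exp (l * X \<omega>)) \<and>
                (\<integral>\<omega>. exp (l * X \<omega>) \<partial>Pr) \<le> exp (l\<^sup>2 / 2))"

end

theory Submission
  imports Defs
begin


lemma outer_mv: "outer u v *v z = (v \<bullet> z) *\<^sub>R u"
  by (simp add: outer_def matrix_vector_mult_def inner_vec_def vec_eq_iff sum_distrib_left mult_ac)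

lemma sum_mv: "finite S \<Longrightarrow> (sum f S) *v z = (\<Sum>x\<in>S. f x *v z)"
  by (induction S rule: finite_induct) (auto simp: matrix_vector_mult_add_rdistrib)

lemma mv_sum: "(A::real^'n::finite^'m::finite) *v (\<Sum>x\<in>S. f x) = (\<Sum>x\<in>S. A *v f x)"
  by (induction S rule: infinite_finite_induct) (auto simp: matrix_vector_right_distrib)

lemma dot_mv: "((A::real^'n::finite^'m::finite) *v x) \<bullet> y = x \<bullet> (transpose A *v y)"
  by (metis dot_lmul_matrix vector_transpose_matrix)

lemma isom_dot:
  assumes "transpose (A::real^'n::finite^'m::finite) ** A = mat 1"
  shows "(A *v x) \<bullet> (A *v y) = x \<bullet> y"
  by (simp add: dot_mv matrix_vector_mul_assoc assms)

lemma orth_expand: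
  fixes S :: "(real^'n::finite) set"
  assumes fin: "finite S" and po: "pairwise orthogonal S" and n1: "\<forall>s\<in>S. norm s = 1"
    and u: "u \<in> span S"
  shows "u = (\<Sum>s\<in>S. (s \<bullet> u) *\<^sub>R s)"
proof -
  obtain c where uc: "u = (\<Sum>v\<in>S. c v *\<^sub>R v)" using u span_finite[OF fin] by auto
  have "s \<bullet> u = c s" if "s \<in> S" for s
  proof -
    have "s \<bullet> u = (\<Sum>v\<in>S. c v * (s \<bullet> v))" by (simp add: uc inner_sum_right)
    also have "\<dots> = (\<Sum>v\<in>S. if v = s then c v else 0)"
    proof (rule sum.cong)
      fix v assume "v \<in> S"
      then show "c v * (s \<bullet> v) = (if v = s then c v else 0)"
        using po n1 that by (auto simp: pairwise_def orthogonal_def inner_commute dot_square_norm)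
    qed simp
    also have "\<dots> = c s" using that fin by (simp add: sum.delta')
    finally show ?thesis .
  qed
  then show ?thesis by (simp add: uc)
qed

lemma odot_sum:
  fixes a :: "nat \<Rightarrow> real^'n::finite"
  assumes "\<And>i j. i < r \<Longrightarrow> j < r \<Longrightarrow> a i \<bullet> a j = (if i = j then 1 else 0)" "k < r"
  shows "a k \<bullet> (\<Sum>i<r. x i *\<^sub>R a i) = x k"
proof -
  have "a k \<bullet> (\<Sum>i<r. x i *\<^sub>R a i) = (\<Sum>i<r. x i * (a k \<bullet> a i))"
    by (simp add: inner_sum_right)
  also have "\<dots> = (\<Sum>i<r. if i = k then x i else 0)"
    by (intro sum.cong refl) (auto simp: assms)
  finally show ?thesis using assms(2) by simp
qed

lemma onorm_sum:
  fixes a :: "nat \<Rightarrow> real^'n::finite"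
  assumes "\<And>i j. i < r \<Longrightarrow> j < r \<Longrightarrow> a i \<bullet> a j = (if i = j then 1 else 0)"
  shows "(\<Sum>i<r. x i *\<^sub>R a i) \<bullet> (\<Sum>i<r. x i *\<^sub>R a i) = (\<Sum>i<r. (x i)\<^sup>2)"
proof -
  have "(\<Sum>i<r. x i *\<^sub>R a i) \<bullet> (\<Sum>i<r. x i *\<^sub>R a i) = (\<Sum>i<r. x i * (a i \<bullet> (\<Sum>j<r. x j *\<^sub>R a j)))"
    by (simp add: inner_sum_left)
  also have "\<dots> = (\<Sum>i<r. (x i)\<^sup>2)"
    by (intro sum.cong refl) (simp add: odot_sum[OF assms] power2_eq_square)
  finally show ?thesis .
qed



lemma group_mod:
  fixes F :: "nat \<Rightarrow> 'b::comm_monoid_add"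
  assumes "0 < r"
  shows "(\<Sum>t\<in>{1..N2}. F t) = (\<Sum>i<r. \<Sum>t\<in>{t\<in>{1..N2}. (t - 1) mod r = i}. F t)"
  by (rule sum.group[symmetric]) (auto simp: assms)

lemma scaleR_mv: "((k::real) *\<^sub>R (M::real^'n::finite^'m::finite)) *v z = k *\<^sub>R (M *v z)"
  by (simp add: matrix_vector_mult_def vec_eq_iff sum_distrib_left mult_ac)

lemma theta_hat_formula:
  fixes Bh :: "real^'r::finite^'d::finite" and a :: "nat \<Rightarrow> real^'d"
  assumes BhBh: "transpose Bh ** Bh = mat 1"
    and an: "\<forall>i<CARD('r). norm (a i) = 1"
    and ao: "\<forall>i j. i<CARD('r) \<longrightarrow> j<CARD('r) \<longrightarrow> i\<noteq>j \<longrightarrow> a i \<bullet> a j = 0"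
    and asp: "span (a ` {..<CARD('r)}) = range (\<lambda>v. Bh *v v)"
    and npos: "\<forall>i<CARD('r). card {t\<in>{1..N2}. (t - 1) mod CARD('r) = i} > 0"
  shows "rt_theta_hat Bh a N2 y = (\<Sum>i<CARD('r).
     ((\<Sum>t\<in>{t\<in>{1..N2}. (t - 1) mod CARD('r) = i}. y t) / real (card {t\<in>{1..N2}. (t - 1) mod CARD('r) = i})) *\<^sub>R a i)"
proof -
  define r where "r = CARD('r)"
  have r0: "0 < r" by (simp add: r_def)
  define T where "T i = {t\<in>{1..N2}. (t - 1) mod r = i}" for i
  define n where "n i = real (card (T i))" for i
  have n0: "i < r \<Longrightarrow> n i > 0" for i using npos by (simp add: n_def T_def r_def)
  define c where "c i = transpose Bh *v a i" for i
  have aa: "i < r \<Longrightarrow> j < r \<Longrightarrow> a i \<bullet> a j = (if i = j then 1 else 0)" for i j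
    using an ao by (auto simp: r_def dot_square_norm)
  have Bc: "Bh *v c i = a i" if "i < r" for i
  proof -
    have "a i \<in> span (a ` {..<r})" using that by (intro span_base) auto
    then obtain w where "a i = Bh *v w" using asp by (auto simp: r_def)
    then show ?thesis by (simp add: c_def matrix_vector_mul_assoc BhBh)
  qed
  have cc: "i < r \<Longrightarrow> j < r \<Longrightarrow> c i \<bullet> c j = (if i = j then 1 else 0)" for i j
    using isom_dot[OF BhBh, of "c i" "c j"] Bc aa by simp
  have fin: "finite (a ` {..<r})" by simp
  have po: "pairwise orthogonal (a ` {..<r})"
    using aa by (auto simp: pairwise_def orthogonal_def)
  have n1: "\<forall>s\<in>a ` {..<r}. norm s = 1" using an by (auto simp: r_def)
  have inj: "inj_on a {..<r}"
    by (rule inj_onI) (metis aa lessThan_iff zero_neq_one)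
  have cexp: "z = (\<Sum>i<r. (c i \<bullet> z) *\<^sub>R c i)" for z
  proof -
    have "Bh *v z \<in> span (a ` {..<r})" using asp by (auto simp: r_def)
    from orth_expand[OF fin po n1 this]
    have "Bh *v z = (\<Sum>i<r. (a i \<bullet> (Bh *v z)) *\<^sub>R a i)"
      by (simp add: sum.reindex[OF inj])
    then have "transpose Bh *v (Bh *v z) = transpose Bh *v (\<Sum>i<r. (a i \<bullet> (Bh *v z)) *\<^sub>R a i)"
      by simp
    then have "z = (\<Sum>i<r. (a i \<bullet> (Bh *v z)) *\<^sub>R c i)"
      by (simp add: matrix_vector_mul_assoc BhBh mv_sum matrix_vector_mult_scaleR c_def)
    moreover have "a i \<bullet> (Bh *v z) = c i \<bullet> z" for i
      using dot_mv[of Bh z "a i"] by (simp add: inner_commute c_def)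
    ultimately show ?thesis by simp
  qed
  have ct: "transpose Bh *v rt_explore r a t = c ((t - 1) mod r)" for t
    by (simp add: rt_explore_def c_def)
  define G where "G = (\<Sum>t\<in>{1..N2}. outer (transpose Bh *v rt_explore r a t)
                                     (transpose Bh *v rt_explore r a t))"
  have Gz: "G *v z = (\<Sum>i<r. (n i * (c i \<bullet> z)) *\<^sub>R c i)" for z
  proof -
    have "G *v z = (\<Sum>t\<in>{1..N2}. (c ((t - 1) mod r) \<bullet> z) *\<^sub>R c ((t - 1) mod r))"
      unfolding G_def ct by (simp add: sum_mv outer_mv)
    also have "\<dots> = (\<Sum>i<r. \<Sum>t\<in>T i. (c i \<bullet> z) *\<^sub>R c i)"
      unfolding group_mod[OF r0] T_def by (intro sum.cong refl) auto
    also have "\<dots> = (\<Sum>i<r. (n i * (c i \<bullet> z)) *\<^sub>R c i)"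
      by (intro sum.cong refl) (simp only: n_def sum_constant_scaleR scaleR_scaleR)
    finally show ?thesis .
  qed
  define H where "H = (\<Sum>i<r. (1 / n i) *\<^sub>R outer (c i) (c i))"
  have Hz: "H *v z = (\<Sum>i<r. ((c i \<bullet> z) / n i) *\<^sub>R c i)" for z
    by (simp add: H_def sum_mv outer_mv scaleR_mv)
  have GH: "G ** H = mat 1"
  proof (rule iffD2[OF matrix_eq], intro allI)
    fix z
    have "(G ** H) *v z = G *v (H *v z)" by (simp add: matrix_vector_mul_assoc)
    also have "\<dots> = (\<Sum>i<r. (c i \<bullet> z) *\<^sub>R c i)"
      unfolding Gz Hz by (intro sum.cong refl) (simp add: odot_sum[OF cc] n0 less_imp_neq[symmetric])
    also have "\<dots> = z" using cexp[of z] by simp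
    finally show "(G ** H) *v z = mat 1 *v z" by simp
  qed
  have HG: "H ** G = mat 1"
    using GH matrix_left_right_inverse by blast
  have inv: "matrix_inv G = H"
  proof -
    have "\<exists>M. G ** M = mat 1 \<and> M ** G = mat 1" using GH HG by blast
    from someI_ex[OF this] obtain M where M: "M = matrix_inv G" "G ** M = mat 1" "M ** G = mat 1"
      by (simp add: matrix_inv_def)
    have "M = M ** (G ** H)" by (simp add: GH)
    also have "\<dots> = H" by (metis matrix_mul_assoc M(3) matrix_mul_lid)
    finally show ?thesis using M by simp
  qed
  define b where "b = (\<Sum>t\<in>{1..N2}. y t *\<^sub>R (transpose Bh *v rt_explore r a t))"
  have b: "b = (\<Sum>i<r. (\<Sum>t\<in>T i. y t) *\<^sub>R c i)"
  proof -
    have "b = (\<Sum>i<r. \<Sum>t\<in>T i. y t *\<^sub>R c i)"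
      unfolding b_def ct group_mod[OF r0] T_def by (intro sum.cong refl) auto
    then show ?thesis by (simp add: scaleR_sum_left)
  qed
  have "rt_theta_hat Bh a N2 y = Bh *v (H *v b)"
    unfolding rt_theta_hat_def Let_def r_def[symmetric] G_def[symmetric] b_def[symmetric] inv ..
  also have "\<dots> = (\<Sum>i<r. ((\<Sum>t\<in>T i. y t) / n i) *\<^sub>R a i)"
    unfolding Hz by (simp add: mv_sum matrix_vector_mult_scaleR Bc b odot_sum[OF cc])
  finally show ?thesis by (simp add: r_def T_def n_def)
qed

lemma proj_eq:
  fixes Bh :: "real^'r::finite^'d::finite" and a :: "nat \<Rightarrow> real^'d"
  assumes BhBh: "transpose Bh ** Bh = mat 1"
    and an: "\<forall>i<CARD('r). norm (a i) = 1"
    and ao: "\<forall>i j. i<CARD('r) \<longrightarrow> j<CARD('r) \<longrightarrow> i\<noteq>j \<longrightarrow> a i \<bullet> a j = 0"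
    and asp: "span (a ` {..<CARD('r)}) = range (\<lambda>v. Bh *v v)"
  shows "(\<Sum>i<CARD('r). (a i \<bullet> v) *\<^sub>R a i) = Bh *v (transpose Bh *v v)"
proof -
  define r where "r = CARD('r)"
  have aa: "i < r \<Longrightarrow> j < r \<Longrightarrow> a i \<bullet> a j = (if i = j then 1 else 0)" for i j
    using an ao by (auto simp: r_def dot_square_norm)
  have fin: "finite (a ` {..<r})" by simp
  have po: "pairwise orthogonal (a ` {..<r})"
    using aa by (auto simp: pairwise_def orthogonal_def)
  have n1: "\<forall>s\<in>a ` {..<r}. norm s = 1" using an by (auto simp: r_def)
  have inj: "inj_on a {..<r}"
    by (rule inj_onI) (metis aa lessThan_iff zero_neq_one)
  have Ba: "Bh *v (transpose Bh *v a i) = a i" if "i < r" for i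
  proof -
    have "a i \<in> span (a ` {..<r})" using that by (intro span_base) auto
    then obtain w where "a i = Bh *v w" using asp by (auto simp: r_def)
    then show ?thesis by (simp add: matrix_vector_mul_assoc BhBh)
  qed
  have "Bh *v (transpose Bh *v v) \<in> span (a ` {..<r})" using asp by (auto simp: r_def)
  from orth_expand[OF fin po n1 this]
  have e: "Bh *v (transpose Bh *v v) = (\<Sum>i<r. (a i \<bullet> (Bh *v (transpose Bh *v v))) *\<^sub>R a i)"
    by (simp add: sum.reindex[OF inj])
  have "a i \<bullet> (Bh *v (transpose Bh *v v)) = a i \<bullet> v" if "i < r" for i
  proof -
    have "a i \<bullet> (Bh *v (transpose Bh *v v)) = (Bh *v (transpose Bh *v a i)) \<bullet> v"
      by (metis dot_mv inner_commute)
    then show ?thesis using Ba[OF that] by simp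
  qed
  then show ?thesis using e by (simp add: r_def)
qed


declare transpose_matrix_vector[simp del] vector_transpose_matrix[simp del]

lemma col_dot: "(transpose A *v v) $ k = column k A \<bullet> (v::real^'n::finite)"
  by (simp add: matrix_vector_mult_def transpose_def column_def inner_vec_def mult_ac)

lemma col_gram: "(transpose A ** A) $ j $ l = column j A \<bullet> column l (A::real^'r::finite^'n::finite)"
  by (simp add: matrix_matrix_mult_def transpose_def column_def inner_vec_def)

lemma normsq_comp: "(x::real^'n::finite) \<bullet> x = (\<Sum>k\<in>UNIV. (x $ k)\<^sup>2)"
  by (simp add: inner_vec_def power2_eq_square)

lemma bias:
  fixes B Bh :: "real^'r::finite^'d::finite" and \<alpha> :: "real^'r" and P :: "(real^'d) set"
  assumes BB: "transpose B ** B = mat 1" and BhBh: "transpose Bh ** Bh = mat 1"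
    and po: "pairwise orthogonal P" and n1: "\<forall>p\<in>P. norm p = 1"
    and spP: "span P = {v. transpose B *v v = 0}"
    and eps: "sqrt (\<Sum>p\<in>P. (norm (transpose Bh *v p))\<^sup>2) \<le> \<epsilon>"
  shows "(norm (B *v \<alpha> - Bh *v (transpose Bh *v (B *v \<alpha>))))\<^sup>2 \<le> (norm \<alpha>)\<^sup>2 * \<epsilon>\<^sup>2"
proof -
  have finP: "finite P"
    using pairwise_orthogonal_independent[OF po] n1 finiteI_independent by force
  define b where "b j = column j B" for j
  define h where "h k = column k Bh" for k
  have bb: "b j \<bullet> b l = (if j = l then 1 else 0)" for j l
    using col_gram[of B j l] BB by (simp add: b_def mat_def)
  have hh: "h k \<bullet> h k = 1" for k
    using col_gram[of Bh k k] BhBh by (simp add: h_def mat_def)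
  have bp: "p \<in> P \<Longrightarrow> b j \<bullet> p = 0" for j p
  proof -
    assume "p \<in> P"
    then have "p \<in> span P" by (rule span_base)
    then have "transpose B *v p = 0" using spP by auto
    then show ?thesis using col_dot[of B p j] by (simp add: b_def)
  qed
  have decomp: "v \<bullet> v = (\<Sum>j\<in>UNIV. (b j \<bullet> v)\<^sup>2) + (\<Sum>p\<in>P. (p \<bullet> v)\<^sup>2)" for v
  proof -
    define u where "u = v - (\<Sum>j\<in>UNIV. (b j \<bullet> v) *\<^sub>R b j)"
    have bu: "b l \<bullet> u = 0" for l
    proof -
      have "b l \<bullet> (\<Sum>j\<in>UNIV. (b j \<bullet> v) *\<^sub>R b j) = (\<Sum>j\<in>UNIV. if j = l then b j \<bullet> v else 0)"
        unfolding inner_sum_right inner_scaleR_right by (intro sum.cong refl) (simp add: bb inner_commute)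
      also have "\<dots> = b l \<bullet> v" by simp
      finally have "b l \<bullet> (\<Sum>j\<in>UNIV. (b j \<bullet> v) *\<^sub>R b j) = b l \<bullet> v" .
      then show ?thesis by (simp add: u_def inner_diff_right)
    qed
    have "transpose B *v u = 0"
      unfolding vec_eq_iff col_dot using bu by (simp add: b_def)
    then have "u \<in> span P" using spP by auto
    from orth_expand[OF finP po n1 this]
    have ue: "u = (\<Sum>p\<in>P. (p \<bullet> u) *\<^sub>R p)" .
    have pu: "p \<in> P \<Longrightarrow> p \<bullet> u = p \<bullet> v" for p
      by (simp add: u_def inner_diff_right inner_sum_right inner_commute[of p] bp)
    have ve: "v = (\<Sum>j\<in>UNIV. (b j \<bullet> v) *\<^sub>R b j) + (\<Sum>p\<in>P. (p \<bullet> v) *\<^sub>R p)"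
    proof -
      have "v = (\<Sum>j\<in>UNIV. (b j \<bullet> v) *\<^sub>R b j) + u" by (simp add: u_def)
      also have "u = (\<Sum>p\<in>P. (p \<bullet> v) *\<^sub>R p)"
        by (subst ue) (intro sum.cong refl, simp add: pu)
      finally show ?thesis .
    qed
    have "v \<bullet> v = v \<bullet> ((\<Sum>j\<in>UNIV. (b j \<bullet> v) *\<^sub>R b j) + (\<Sum>p\<in>P. (p \<bullet> v) *\<^sub>R p))"
      using ve by simp
    also have "\<dots> = (\<Sum>j\<in>UNIV. (b j \<bullet> v)\<^sup>2) + (\<Sum>p\<in>P. (p \<bullet> v)\<^sup>2)"
      by (simp add: inner_add_right inner_sum_right power2_eq_square inner_commute)
    finally show ?thesis .
  qed
  have Bhp: "(norm (transpose Bh *v p))\<^sup>2 = (\<Sum>k\<in>UNIV. (h k \<bullet> p)\<^sup>2)" for p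
    by (simp add: power2_norm_eq_inner normsq_comp col_dot h_def)
  have "(\<Sum>p\<in>P. (norm (transpose Bh *v p))\<^sup>2) = (\<Sum>k\<in>UNIV. \<Sum>p\<in>P. (p \<bullet> h k)\<^sup>2)"
    by (simp add: Bhp sum.swap[of _ P] inner_commute)
  also have "\<dots> = (\<Sum>k\<in>UNIV. 1 - (\<Sum>j\<in>UNIV. (b j \<bullet> h k)\<^sup>2))"
    by (intro sum.cong refl) (metis decomp hh add_diff_cancel_left')
  finally have e1: "(\<Sum>p\<in>P. (norm (transpose Bh *v p))\<^sup>2) = (\<Sum>k\<in>(UNIV::'r set). 1 - (\<Sum>j\<in>UNIV. (b j \<bullet> h k)\<^sup>2))" .
  have e2: "(\<Sum>p\<in>P. (norm (transpose Bh *v p))\<^sup>2) \<le> \<epsilon>\<^sup>2"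
  proof -
    define S where "S = (\<Sum>p\<in>P. (norm (transpose Bh *v p))\<^sup>2)"
    have "0 \<le> S" unfolding S_def by (simp add: sum_nonneg)
    then have "S = (sqrt S)\<^sup>2" by simp
    also have "\<dots> \<le> \<epsilon>\<^sup>2" using eps \<open>0 \<le> S\<close> by (intro power_mono) (simp_all add: S_def)
    finally show ?thesis by (simp add: S_def)
  qed
  define w where "w j = b j - Bh *v (transpose Bh *v b j)" for j
  have w2: "w j \<bullet> w j = 1 - (\<Sum>k\<in>UNIV. (h k \<bullet> b j)\<^sup>2)" for j
  proof -
    define x where "x = transpose Bh *v b j"
    have "w j \<bullet> w j = b j \<bullet> b j - 2 * ((Bh *v x) \<bullet> b j) + (Bh *v x) \<bullet> (Bh *v x)"
      by (simp add: w_def x_def[symmetric] inner_diff_left inner_diff_right inner_commute)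
    also have "(Bh *v x) \<bullet> b j = x \<bullet> x" by (simp add: dot_mv x_def)
    also have "(Bh *v x) \<bullet> (Bh *v x) = x \<bullet> x" by (rule isom_dot[OF BhBh])
    also have "x \<bullet> x = (\<Sum>k\<in>UNIV. (h k \<bullet> b j)\<^sup>2)"
      by (simp add: normsq_comp x_def col_dot h_def)
    finally show ?thesis using bb[of j j] by simp
  qed
  have sw: "(\<Sum>j\<in>UNIV. w j \<bullet> w j) \<le> \<epsilon>\<^sup>2"
  proof -
    have "(\<Sum>j\<in>UNIV. w j \<bullet> w j) = (\<Sum>k\<in>(UNIV::'r set). 1 - (\<Sum>j\<in>UNIV. (b j \<bullet> h k)\<^sup>2))"
      unfolding w2 sum_subtractf
      by (subst sum.swap) (simp add: inner_commute)
    then show ?thesis using e1 e2 by simp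
  qed
  have lin: "B *v \<alpha> - Bh *v (transpose Bh *v (B *v \<alpha>)) = (\<Sum>j\<in>UNIV. (\<alpha> $ j) *\<^sub>R w j)"
    by (simp add: matrix_mult_sum[of B \<alpha>] scalar_mult_eq_scaleR mv_sum matrix_vector_mult_scaleR
        w_def b_def scaleR_diff_right sum_subtractf)
  have "norm (\<Sum>j\<in>UNIV. (\<alpha> $ j) *\<^sub>R w j) \<le> (\<Sum>j\<in>UNIV. \<bar>\<alpha> $ j\<bar> * norm (w j))"
    by (rule order_trans[OF norm_sum]) simp
  then have "(norm (\<Sum>j\<in>UNIV. (\<alpha> $ j) *\<^sub>R w j))\<^sup>2 \<le> (\<Sum>j\<in>UNIV. \<bar>\<alpha> $ j\<bar> * norm (w j))\<^sup>2"
    by (simp add: power_mono)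
  also have "\<dots> \<le> (\<Sum>j\<in>UNIV. \<bar>\<alpha> $ j\<bar>\<^sup>2) * (\<Sum>j\<in>UNIV. (norm (w j))\<^sup>2)"
    by (rule Cauchy_Schwarz_ineq_sum)
  also have "\<dots> = (norm \<alpha>)\<^sup>2 * (\<Sum>j\<in>UNIV. w j \<bullet> w j)"
    by (simp add: power2_norm_eq_inner normsq_comp)
  also have "\<dots> \<le> (norm \<alpha>)\<^sup>2 * \<epsilon>\<^sup>2"
    using sw by (simp add: mult_left_mono)
  finally show ?thesis using lin by simp
qed



lemma sel_eq:
  fixes v s :: "real^'d::finite"
  assumes "v \<noteq> 0" "norm s \<le> 1" "\<forall>x. norm x \<le> 1 \<longrightarrow> x \<bullet> v \<le> s \<bullet> v"
  shows "s = (1 / norm v) *\<^sub>R v"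
proof -
  define u where "u = (1 / norm v) *\<^sub>R v"
  have nu: "norm u = 1" using assms(1) by (simp add: u_def)
  have uv: "u \<bullet> v = norm v" using assms(1) by (simp add: u_def dot_square_norm power2_eq_square)
  have "norm v \<le> s \<bullet> v" using assms(3) nu uv by (metis order_refl)
  then have su: "1 \<le> s \<bullet> u" using assms(1) by (simp add: u_def)
  have "(norm (s - u))\<^sup>2 = (norm s)\<^sup>2 - 2 * (s \<bullet> u) + (norm u)\<^sup>2"
    by (simp add: power2_norm_eq_inner inner_diff_left inner_diff_right inner_commute)
  also have "\<dots> \<le> 0"
  proof -
    have "(norm s)\<^sup>2 \<le> 1" using assms(2) by (simp add: power_le_one)
    then show ?thesis using su nu by simp
  qed
  finally have "norm (s - u) = 0" by simp
  then show ?thesis by (simp add: u_def)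
qed

lemma exploit_bound:
  fixes \<theta> v xs s :: "real^'d::finite"
  assumes phi: "0 < \<phi>" "\<phi> \<le> norm \<theta>" and xs: "norm xs \<le> 1" and s: "norm s \<le> 1"
    and sv: "\<forall>x. norm x \<le> 1 \<longrightarrow> x \<bullet> v \<le> s \<bullet> v"
  shows "(xs - s) \<bullet> \<theta> \<le> 2 * (norm (v - \<theta>))\<^sup>2 / \<phi>"
proof -
  have nt: "0 < norm \<theta>" using phi by linarith
  have x1: "xs \<bullet> \<theta> \<le> norm \<theta>"
    using norm_cauchy_schwarz[of xs \<theta>] mult_right_mono[OF xs norm_ge_zero[of \<theta>]] by simp
  have s1: "- (s \<bullet> \<theta>) \<le> norm \<theta>"
    using norm_cauchy_schwarz[of s "-\<theta>"] mult_right_mono[OF s norm_ge_zero[of \<theta>]] by simp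
  show ?thesis
  proof (cases "v = 0")
    case True
    have "(xs - s) \<bullet> \<theta> \<le> 2 * norm \<theta>" using x1 s1 by (simp add: inner_diff_left)
    also have "\<dots> = 2 * norm \<theta> * \<phi> / \<phi>" using phi by simp
    also have "\<dots> \<le> 2 * norm \<theta> * norm \<theta> / \<phi>" using phi nt
      by (intro divide_right_mono mult_left_mono) auto
    finally show ?thesis using True by (simp add: power2_eq_square)
  next
    case False
    define u where "u = (1 / norm v) *\<^sub>R v"
    have su: "s = u" unfolding u_def by (rule sel_eq[OF False s sv])
    have nu: "norm u = 1" using False by (simp add: u_def)
    have e1: "(norm (\<theta> - norm \<theta> *\<^sub>R u))\<^sup>2 = 2 * norm \<theta> * (norm \<theta> - u \<bullet> \<theta>)"
    proof -
      have "(\<theta> - norm \<theta> *\<^sub>R u) \<bullet> (\<theta> - norm \<theta> *\<^sub>R u) = \<theta> \<bullet> \<theta> - 2 * norm \<theta> * (u \<bullet> \<theta>) + norm \<theta> * norm \<theta> * (u \<bullet> u)"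
        by (simp add: inner_diff_left inner_diff_right inner_commute[of \<theta> u] algebra_simps)
      moreover have "u \<bullet> u = 1" "\<theta> \<bullet> \<theta> = norm \<theta> * norm \<theta>" using nu by (simp_all add: dot_square_norm power2_eq_square)
      ultimately show ?thesis by (simp add: power2_norm_eq_inner algebra_simps)
    qed
    have vu: "v = norm v *\<^sub>R u" using False by (simp add: u_def)
    have "norm (v - norm \<theta> *\<^sub>R u) = \<bar>norm v - norm \<theta>\<bar>"
      using nu by (subst vu) (simp add: scaleR_diff_left[symmetric])
    also have "\<dots> \<le> norm (v - \<theta>)" by (rule norm_triangle_ineq3)
    finally have "norm (\<theta> - norm \<theta> *\<^sub>R u) \<le> 2 * norm (v - \<theta>)"
      using norm_triangle_ineq[of "\<theta> - v" "v - norm \<theta> *\<^sub>R u"] by (simp add: norm_minus_commute)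
    then have "(norm (\<theta> - norm \<theta> *\<^sub>R u))\<^sup>2 \<le> (2 * norm (v - \<theta>))\<^sup>2"
      by (intro power_mono) auto
    then have "2 * norm \<theta> * (norm \<theta> - u \<bullet> \<theta>) \<le> 4 * (norm (v - \<theta>))\<^sup>2"
      using e1 by (simp add: power_mult_distrib)
    then have "norm \<theta> - u \<bullet> \<theta> \<le> 2 * (norm (v - \<theta>))\<^sup>2 / norm \<theta>"
      using nt by (simp add: field_simps)
    also have "\<dots> \<le> 2 * (norm (v - \<theta>))\<^sup>2 / \<phi>"
      using phi nt by (intro divide_left_mono) auto
    finally show ?thesis using x1 su by (simp add: inner_diff_left)
  qed
qed



lemma sq_le_exp: "(x::real)\<^sup>2 \<le> 4 * (exp x + exp (- x))"
proof -
  have k: "y\<^sup>2 \<le> 4 * exp y" if "0 \<le> y" for y :: real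
  proof -
    have "exp (y/2) * exp (y/2) = exp y" by (simp add: exp_add[symmetric])
    have "y/2 \<le> exp (y/2)" using exp_ge_add_one_self[of "y/2"] by linarith
    then have "(y/2)\<^sup>2 \<le> (exp (y/2))\<^sup>2"
      using that by (intro power_mono) auto
    then show ?thesis using \<open>exp (y/2) * exp (y/2) = exp y\<close> by (simp add: power2_eq_square)
  qed
  show ?thesis
  proof (cases "0 \<le> x")
    case True
    have "4 * exp x \<le> 4 * (exp x + exp (- x))" by simp
    then show ?thesis using k[OF True] by linarith
  next
    case False
    have "(-x)\<^sup>2 \<le> 4 * exp (- x)" using k[of "-x"] False by simp
    moreover have "4 * exp (-x) \<le> 4 * (exp x + exp (- x))" by simp
    ultimately show ?thesis by (metis power2_minus order_trans)
  qed
qed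

lemma abs_mult_le_sq: "\<bar>(x::real) * y\<bar> \<le> x\<^sup>2 + y\<^sup>2"
proof -
  have "0 \<le> (\<bar>x\<bar> - \<bar>y\<bar>)\<^sup>2" by simp
  then have "2 * (\<bar>x\<bar> * \<bar>y\<bar>) \<le> x\<^sup>2 + y\<^sup>2" by (simp add: power2_eq_square algebra_simps)
  moreover have "0 \<le> \<bar>x\<bar> * \<bar>y\<bar>" by simp
  ultimately show ?thesis unfolding abs_mult by linarith
qed

lemma noise_sq:
  fixes Pr :: "'a measure" and \<eta> :: "nat \<Rightarrow> 'a \<Rightarrow> real"
  assumes ps: "prob_space Pr" and ind: "prob_space.indep_vars Pr (\<lambda>_. borel) \<eta> UNIV"
    and mom: "\<forall>t. integrable Pr (\<eta> t) \<and> (\<integral>\<omega>. \<eta> t \<omega> \<partial>Pr) = 0 \<and> subgaussian1 Pr (\<eta> t)"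
    and fin: "finite T"
  shows "integrable Pr (\<lambda>\<omega>. (\<Sum>t\<in>T. \<eta> t \<omega>)\<^sup>2) \<and> (\<integral>\<omega>. (\<Sum>t\<in>T. \<eta> t \<omega>)\<^sup>2 \<partial>Pr) \<le> 24 * real (card T)"
proof -
  interpret prob_space Pr by (rule ps)
  have meas: "\<eta> t \<in> borel_measurable Pr" for t
    using ind by (simp add: indep_vars_def)
  have e1: "integrable Pr (\<lambda>\<omega>. exp (\<eta> t \<omega>)) \<and> (\<integral>\<omega>. exp (\<eta> t \<omega>) \<partial>Pr) \<le> exp (1/2)" for t
  proof -
    have "subgaussian1 Pr (\<eta> t)" using mom by simp
    then have "integrable Pr (\<lambda>\<omega>. exp (1 * \<eta> t \<omega>)) \<and> (\<integral>\<omega>. exp (1 * \<eta> t \<omega>) \<partial>Pr) \<le> exp (1\<^sup>2 / 2)"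
      unfolding subgaussian1_def by blast
    then show ?thesis by simp
  qed
  have e2: "integrable Pr (\<lambda>\<omega>. exp (- \<eta> t \<omega>)) \<and> (\<integral>\<omega>. exp (- \<eta> t \<omega>) \<partial>Pr) \<le> exp (1/2)" for t
  proof -
    have "subgaussian1 Pr (\<eta> t)" using mom by simp
    then have "integrable Pr (\<lambda>\<omega>. exp ((-1) * \<eta> t \<omega>)) \<and> (\<integral>\<omega>. exp ((-1) * \<eta> t \<omega>) \<partial>Pr) \<le> exp ((-1)\<^sup>2 / 2)"
      unfolding subgaussian1_def by blast
    then show ?thesis by simp
  qed
  have sqint: "integrable Pr (\<lambda>\<omega>. (\<eta> t \<omega>)\<^sup>2)" for t
  proof (rule Bochner_Integration.integrable_bound[where f="\<lambda>\<omega>. 4 * (exp (\<eta> t \<omega>) + exp (- \<eta> t \<omega>))"])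
    show "integrable Pr (\<lambda>\<omega>. 4 * (exp (\<eta> t \<omega>) + exp (- \<eta> t \<omega>)))"
      using e1 e2 by auto
    show "(\<lambda>\<omega>. (\<eta> t \<omega>)\<^sup>2) \<in> borel_measurable Pr" using meas by measurable
    show "AE x in Pr. norm ((\<eta> t x)\<^sup>2) \<le> norm (4 * (exp (\<eta> t x) + exp (- \<eta> t x)))"
      using sq_le_exp by (simp add: add_pos_pos)
  qed
  have sqE: "(\<integral>\<omega>. (\<eta> t \<omega>)\<^sup>2 \<partial>Pr) \<le> 24" for t
  proof -
    have "(\<integral>\<omega>. (\<eta> t \<omega>)\<^sup>2 \<partial>Pr) \<le> (\<integral>\<omega>. 4 * (exp (\<eta> t \<omega>) + exp (- \<eta> t \<omega>)) \<partial>Pr)"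
      using e1 e2 sqint sq_le_exp by (intro integral_mono) auto
    also have "\<dots> = 4 * ((\<integral>\<omega>. exp (\<eta> t \<omega>) \<partial>Pr) + (\<integral>\<omega>. exp (- \<eta> t \<omega>) \<partial>Pr))"
      using e1 e2 by simp
    also have "\<dots> \<le> 4 * (exp (1/2) + exp (1/2))" using e1[of t] e2[of t] by (intro mult_left_mono add_mono) auto
    also have "\<dots> \<le> 4 * (3 + 3)"
      using exp_le order_trans[OF exp_le_cancel_iff[THEN iffD2, of "1/2" 1]] by simp
    finally show ?thesis by simp
  qed
  have prodint: "integrable Pr (\<lambda>\<omega>. \<eta> t \<omega> * \<eta> s \<omega>)" for t s
  proof (rule Bochner_Integration.integrable_bound[where f="\<lambda>\<omega>. (\<eta> t \<omega>)\<^sup>2 + (\<eta> s \<omega>)\<^sup>2"])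
    show "integrable Pr (\<lambda>\<omega>. (\<eta> t \<omega>)\<^sup>2 + (\<eta> s \<omega>)\<^sup>2)" using sqint by auto
    show "(\<lambda>\<omega>. \<eta> t \<omega> * \<eta> s \<omega>) \<in> borel_measurable Pr" using meas by measurable
    show "AE x in Pr. norm (\<eta> t x * \<eta> s x) \<le> norm ((\<eta> t x)\<^sup>2 + (\<eta> s x)\<^sup>2)"
      using abs_mult_le_sq by simp
  qed
  have indv: "indep_var borel (\<eta> t) borel (\<eta> s)" if "t \<noteq> s" for t s
  proof -
    have "indep_var (PiM {t} (\<lambda>_. borel)) (\<lambda>\<omega>. restrict (\<lambda>i. \<eta> i \<omega>) {t})
                    (PiM {s} (\<lambda>_. borel)) (\<lambda>\<omega>. restrict (\<lambda>i. \<eta> i \<omega>) {s})"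
      using that by (intro indep_var_restrict[OF ind]) auto
    from indep_var_compose[OF this measurable_component_singleton[of t "{t}" "\<lambda>_. borel"]
        measurable_component_singleton[of s "{s}" "\<lambda>_. borel"]]
    show ?thesis by (simp add: comp_def)
  qed
  have cross: "(\<integral>\<omega>. \<eta> t \<omega> * \<eta> s \<omega> \<partial>Pr) = (if t = s then (\<integral>\<omega>. (\<eta> t \<omega>)\<^sup>2 \<partial>Pr) else 0)" for t s
  proof (cases "t = s")
    case True then show ?thesis by (simp add: power2_eq_square)
  next
    case False
    then show ?thesis using indep_var_lebesgue_integral[OF indv[OF False]] mom by simp
  qed
  have sq: "(\<Sum>t\<in>T. \<eta> t \<omega>)\<^sup>2 = (\<Sum>t\<in>T. \<Sum>s\<in>T. \<eta> t \<omega> * \<eta> s \<omega>)" for \<omega>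
    by (simp add: power2_eq_square sum_product)
  have int: "integrable Pr (\<lambda>\<omega>. (\<Sum>t\<in>T. \<eta> t \<omega>)\<^sup>2)"
    unfolding sq using prodint by auto
  have "(\<integral>\<omega>. (\<Sum>t\<in>T. \<eta> t \<omega>)\<^sup>2 \<partial>Pr) = (\<Sum>t\<in>T. \<Sum>s\<in>T. \<integral>\<omega>. \<eta> t \<omega> * \<eta> s \<omega> \<partial>Pr)"
    unfolding sq using prodint by (simp add: integral_sum)
  also have "\<dots> = (\<Sum>t\<in>T. \<integral>\<omega>. (\<eta> t \<omega>)\<^sup>2 \<partial>Pr)"
    unfolding cross using fin by simp
  also have "\<dots> \<le> (\<Sum>t\<in>T. 24)" by (intro sum_mono sqE)
  finally show ?thesis using int by simp
qed



lemma card_T_lower: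
  assumes "0 < r" "i < r"
  shows "N2 div r \<le> card {t\<in>{1..N2}. (t - 1) mod r = i}"
proof -
  have "inj_on (\<lambda>k. k * r + i + 1) {..<N2 div r}" by (auto simp: inj_on_def)
  moreover have "(\<lambda>k. k * r + i + 1) ` {..<N2 div r} \<subseteq> {t\<in>{1..N2}. (t - 1) mod r = i}"
  proof
    fix t assume "t \<in> (\<lambda>k. k * r + i + 1) ` {..<N2 div r}"
    then obtain k where k: "k < N2 div r" "t = k * r + i + 1" by auto
    have "Suc k * r \<le> (N2 div r) * r" using k(1) by (intro mult_right_mono) auto
    also have "\<dots> \<le> N2" by simp
    finally have "t \<le> N2" using k(2) assms by simp
    then show "t \<in> {t\<in>{1..N2}. (t - 1) mod r = i}" using k assms by auto
  qed
  ultimately have "card ((\<lambda>k. k * r + i + 1) ` {..<N2 div r}) \<le> card {t\<in>{1..N2}. (t - 1) mod r = i}"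
    by (intro card_mono) auto
  then show ?thesis using card_image[OF \<open>inj_on _ _\<close>] by simp
qed

theorem theorem1:
  fixes \<phi>min \<phi>max :: real
  assumes "0 < \<phi>min" and "\<phi>min \<le> \<phi>max"
  shows "\<exists>C>0. \<exists>N0::nat.
    \<forall>(Pr::'a measure) (\<eta>::nat \<Rightarrow> 'a \<Rightarrow> real) (B::real^'r::finite^'d::finite) (\<alpha>::real^'r)
      (Bh::real^'r^'d) (a::nat \<Rightarrow> real^'d) (P::(real^'d) set)
      (sel::real^'d \<Rightarrow> real^'d) (xstar::real^'d) (\<epsilon>::real) (N::nat).
      ( prob_space Pr
      \<and> prob_space.indep_vars Pr (\<lambda>_. borel) \<eta> UNIV
      \<and> (\<forall>t. integrable Pr (\<eta> t) \<and> (\<integral>\<omega>. \<eta> t \<omega> \<partial>Pr) = 0 \<and> subgaussian1 Pr (\<eta> t))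
      \<and> transpose B ** B = mat 1
      \<and> \<phi>min \<le> norm (B *v \<alpha>) \<and> norm (B *v \<alpha>) \<le> \<phi>max
      \<and> transpose Bh ** Bh = mat 1
      \<and> pairwise orthogonal P \<and> (\<forall>p\<in>P. norm p = 1)
      \<and> span P = {v. transpose B *v v = 0}
      \<and> sqrt (\<Sum>p\<in>P. (norm (transpose Bh *v p))\<^sup>2) \<le> \<epsilon>
      \<and> (\<forall>i<CARD('r). norm (a i) = 1)
      \<and> (\<forall>i j. i < CARD('r) \<longrightarrow> j < CARD('r) \<longrightarrow> i \<noteq> j \<longrightarrow> a i \<bullet> a j = 0)
      \<and> span (a ` {..<CARD('r)}) = range (\<lambda>v. Bh *v v)
      \<and> (\<forall>v. norm (sel v) \<le> 1 \<and> (\<forall>x. norm x \<le> 1 \<longrightarrow> x \<bullet> v \<le> sel v \<bullet> v))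
      \<and> norm xstar \<le> 1 \<and> (\<forall>x. norm x \<le> 1 \<longrightarrow> x \<bullet> (B *v \<alpha>) \<le> xstar \<bullet> (B *v \<alpha>))
      \<and> N0 \<le> N )
      \<longrightarrow> integrable Pr (\<lambda>\<omega>. rt_regret Bh a sel (B *v \<alpha>) xstar (\<lambda>t. \<eta> t \<omega>) N)
        \<and> (\<integral>\<omega>. rt_regret Bh a sel (B *v \<alpha>) xstar (\<lambda>t. \<eta> t \<omega>) N \<partial>Pr)
            \<le> C * (real CARD('r) * sqrt (real N) + real N * \<epsilon>\<^sup>2)"

proof -
  define C where "C = 4 * \<phi>max + 192 / \<phi>min + 4 * \<phi>max\<^sup>2 / \<phi>min"
  have Cpos: "0 < C" using assms unfolding C_def
    by (intro add_pos_nonneg add_nonneg_pos) auto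
  show ?thesis
  proof (rule exI[of _ C], rule conjI[OF Cpos], rule exI[of _ 4], intro allI impI)
    fix Pr :: "'a measure" and \<eta> :: "nat \<Rightarrow> 'a \<Rightarrow> real" and B :: "real^'r::finite^'d::finite"
      and \<alpha> :: "real^'r" and Bh :: "real^'r^'d" and a :: "nat \<Rightarrow> real^'d" and P :: "(real^'d) set"
      and sel :: "real^'d \<Rightarrow> real^'d" and xstar :: "real^'d" and \<epsilon> :: real and N :: nat
    assume H: "prob_space Pr
      \<and> prob_space.indep_vars Pr (\<lambda>_. borel) \<eta> UNIV
      \<and> (\<forall>t. integrable Pr (\<eta> t) \<and> (\<integral>\<omega>. \<eta> t \<omega> \<partial>Pr) = 0 \<and> subgaussian1 Pr (\<eta> t))
      \<and> transpose B ** B = mat 1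
      \<and> \<phi>min \<le> norm (B *v \<alpha>) \<and> norm (B *v \<alpha>) \<le> \<phi>max
      \<and> transpose Bh ** Bh = mat 1
      \<and> pairwise orthogonal P \<and> (\<forall>p\<in>P. norm p = 1)
      \<and> span P = {v. transpose B *v v = 0}
      \<and> sqrt (\<Sum>p\<in>P. (norm (transpose Bh *v p))\<^sup>2) \<le> \<epsilon>
      \<and> (\<forall>i<CARD('r). norm (a i) = 1)
      \<and> (\<forall>i j. i < CARD('r) \<longrightarrow> j < CARD('r) \<longrightarrow> i \<noteq> j \<longrightarrow> a i \<bullet> a j = 0)
      \<and> span (a ` {..<CARD('r)}) = range (\<lambda>v. Bh *v v)
      \<and> (\<forall>v. norm (sel v) \<le> 1 \<and> (\<forall>x. norm x \<le> 1 \<longrightarrow> x \<bullet> v \<le> sel v \<bullet> v))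
      \<and> norm xstar \<le> 1 \<and> (\<forall>x. norm x \<le> 1 \<longrightarrow> x \<bullet> (B *v \<alpha>) \<le> xstar \<bullet> (B *v \<alpha>))
      \<and> 4 \<le> N"
    have ps: "prob_space Pr" using H by blast
    interpret prob_space Pr by (rule ps)
    have ind: "indep_vars (\<lambda>_. borel) \<eta> UNIV" using H by blast
    have mom: "\<forall>t. integrable Pr (\<eta> t) \<and> (\<integral>\<omega>. \<eta> t \<omega> \<partial>Pr) = 0 \<and> subgaussian1 Pr (\<eta> t)" using H by blast
    have BB: "transpose B ** B = mat 1" using H by blast
    have phmin: "\<phi>min \<le> norm (B *v \<alpha>)" and phmax: "norm (B *v \<alpha>) \<le> \<phi>max" using H by blast+
    have BhBh: "transpose Bh ** Bh = mat 1" using H by blast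
    have po: "pairwise orthogonal P" and n1: "\<forall>p\<in>P. norm p = 1" using H by blast+
    have spP: "span P = {v. transpose B *v v = 0}" using H by blast
    have eps: "sqrt (\<Sum>p\<in>P. (norm (transpose Bh *v p))\<^sup>2) \<le> \<epsilon>" using H by blast
    have an: "\<forall>i<CARD('r). norm (a i) = 1" using H by blast
    have ao: "\<forall>i j. i < CARD('r) \<longrightarrow> j < CARD('r) \<longrightarrow> i \<noteq> j \<longrightarrow> a i \<bullet> a j = 0" using H by blast
    have asp: "span (a ` {..<CARD('r)}) = range (\<lambda>v. Bh *v v)" using H by blast
    have selp: "\<forall>v. norm (sel v) \<le> 1 \<and> (\<forall>x. norm x \<le> 1 \<longrightarrow> x \<bullet> v \<le> sel v \<bullet> v)" using H by blast
    have xs1: "norm xstar \<le> 1" using H by blast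
    have N4: "4 \<le> N" using H by blast
    define r where "r = CARD('r)"
    have r0: "0 < r" by (simp add: r_def)
    define \<theta> where "\<theta> = B *v \<alpha>"
    define N2 where "N2 = rt_N2 r N"
    define T where "T i = {t\<in>{1..N2}. (t - 1) mod r = i}" for i
    define n where "n i = real (card (T i))" for i
    define Z where "Z i \<omega> = (\<Sum>t\<in>T i. \<eta> t \<omega>)" for i \<omega>
    define th where "th \<omega> = (\<Sum>i<r. (a i \<bullet> \<theta> + Z i \<omega> / n i) *\<^sub>R a i)" for \<omega>
    define \<beta> where "\<beta> = norm (\<theta> - Bh *v (transpose Bh *v \<theta>))"
    have aa: "i < r \<Longrightarrow> j < r \<Longrightarrow> a i \<bullet> a j = (if i = j then 1 else 0)" for i j
      using an ao by (auto simp: r_def dot_square_norm)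
    have sN: "2 \<le> sqrt (real N)" using N4 real_sqrt_le_mono[of 4 "real N"] by simp
    have N2lo: "real r * sqrt (real N) \<le> real N2"
      unfolding N2_def rt_N2_def by linarith
    have N2hi: "real N2 \<le> 2 * real r * sqrt (real N)"
    proof -
      have "real N2 = real_of_int \<lceil>real r * sqrt (real N)\<rceil>"
        unfolding N2_def rt_N2_def by simp
      then have "real N2 \<le> real r * sqrt (real N) + 1"
        using of_int_ceiling_le_add_one[of "real r * sqrt (real N)"] by linarith
      moreover have "1 * 1 \<le> real r * sqrt (real N)" using r0 sN N4
        by (intro mult_mono) auto
      ultimately show ?thesis by linarith
    qed
    have nlo: "sqrt (real N) / 2 \<le> n i" if "i < r" for i
    proof -
      have c: "N2 div r \<le> card (T i)" using card_T_lower[OF r0 that] by (simp add: T_def)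
      have "N2 < (N2 div r) * r + r" using r0
        by (metis add_less_cancel_left div_mult_mod_eq mod_less_divisor)
      then have "real N2 < real (N2 div r) * real r + real r"
        by (metis of_nat_add of_nat_less_iff of_nat_mult)
      then have "real N2 / real r < real (N2 div r) + 1" using r0
        by (simp add: divide_less_eq algebra_simps)
      moreover have "sqrt (real N) \<le> real N2 / real r" using N2lo r0
        by (simp add: le_divide_eq mult.commute)
      moreover have "real (N2 div r) \<le> n i" using c by (simp add: n_def)
      ultimately show ?thesis using sN by linarith
    qed
    have npos: "0 < n i" if "i < r" for i
      using nlo[OF that] sN by linarith
    have npos': "\<forall>i<CARD('r). card {t\<in>{1..N2}. (t - 1) mod CARD('r) = i} > 0"
      using npos by (simp add: n_def T_def r_def)
    have thf0: "rt_theta_hat Bh a N2 y = (\<Sum>i<r. ((\<Sum>t\<in>T i. y t) / n i) *\<^sub>R a i)" for y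
      using theta_hat_formula[OF BhBh an ao asp npos'] by (simp add: T_def n_def r_def)
    have yi: "(\<Sum>t\<in>T i. rt_explore r a t \<bullet> \<theta> + \<eta> t \<omega>) / n i = a i \<bullet> \<theta> + Z i \<omega> / n i"
      if "i < r" for i \<omega>
    proof -
      have "(\<Sum>t\<in>T i. rt_explore r a t \<bullet> \<theta> + \<eta> t \<omega>) = (\<Sum>t\<in>T i. a i \<bullet> \<theta> + \<eta> t \<omega>)"
        by (intro sum.cong refl) (simp add: T_def rt_explore_def)
      also have "\<dots> = n i * (a i \<bullet> \<theta>) + Z i \<omega>" by (simp add: sum.distrib n_def Z_def)
      finally show ?thesis using npos[OF that] by (simp add: field_simps)
    qed
    have thf: "rt_theta_hat Bh a N2 (\<lambda>s. rt_explore r a s \<bullet> \<theta> + \<eta> s \<omega>) = th \<omega>" for \<omega>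
      unfolding thf0 th_def by (intro sum.cong refl) (simp add: yi)
    have proj: "(\<Sum>i<r. (a i \<bullet> \<theta>) *\<^sub>R a i) = Bh *v (transpose Bh *v \<theta>)"
      using proj_eq[OF BhBh an ao asp] by (simp add: r_def)
    have Qb: "(norm (th \<omega> - \<theta>))\<^sup>2 \<le> 2 * \<beta>\<^sup>2 + 2 * (\<Sum>i<r. (Z i \<omega> / n i)\<^sup>2)" for \<omega>
    proof -
      define u where "u = Bh *v (transpose Bh *v \<theta>) - \<theta>"
      define w where "w = (\<Sum>i<r. (Z i \<omega> / n i) *\<^sub>R a i)"
      have "th \<omega> = (\<Sum>i<r. (a i \<bullet> \<theta>) *\<^sub>R a i) + w"
        by (simp add: th_def w_def scaleR_add_left sum.distrib)
      then have e: "th \<omega> - \<theta> = u + w" by (simp add: proj u_def)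
      have nu: "norm u = \<beta>" by (simp add: u_def \<beta>_def norm_minus_commute)
      have nw: "(norm w)\<^sup>2 = (\<Sum>i<r. (Z i \<omega> / n i)\<^sup>2)"
        unfolding power2_norm_eq_inner w_def by (rule onorm_sum[OF aa])
      have "norm (u + w) \<le> norm u + norm w" by (rule norm_triangle_ineq)
      then have "(norm (u + w))\<^sup>2 \<le> (norm u + norm w)\<^sup>2" by (intro power_mono) auto
      also have "\<dots> \<le> 2 * (norm u)\<^sup>2 + 2 * (norm w)\<^sup>2"
        using sum_squares_bound[of "norm u" "norm w"] by (simp add: power2_eq_square algebra_simps)
      finally show ?thesis using e nu nw by simp
    qed
    have bias: "\<beta>\<^sup>2 \<le> \<phi>max\<^sup>2 * \<epsilon>\<^sup>2"
    proof -
      have "\<beta>\<^sup>2 \<le> (norm \<alpha>)\<^sup>2 * \<epsilon>\<^sup>2"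
        unfolding \<beta>_def \<theta>_def by (rule bias[OF BB BhBh po n1 spP eps])
      moreover have "norm \<alpha> = norm \<theta>"
        using isom_dot[OF BB, of \<alpha> \<alpha>] by (simp add: \<theta>_def norm_eq_sqrt_inner)
      moreover have "(norm \<theta>)\<^sup>2 \<le> \<phi>max\<^sup>2" using phmax by (simp add: \<theta>_def power_mono)
      ultimately show ?thesis by (metis mult_right_mono zero_le_power2 order_trans)
    qed
    have act: "rt_action Bh a sel \<theta> (\<lambda>t. \<eta> t \<omega>) N t = (if t \<le> N2 then a ((t - 1) mod r) else sel (th \<omega>))" for \<omega> t
      unfolding rt_action_def Let_def r_def[symmetric] N2_def[symmetric] thf by (simp add: rt_explore_def)
    have reg: "rt_regret Bh a sel \<theta> xstar (\<lambda>t. \<eta> t \<omega>) N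
       = (\<Sum>t\<in>{1..N}. (xstar - (if t \<le> N2 then a ((t - 1) mod r) else sel (th \<omega>))) \<bullet> \<theta>)" for \<omega>
      by (simp add: rt_regret_def act)
    have selx: "sel v = (if v = 0 then sel 0 else (1 / norm v) *\<^sub>R v)" for v
      using sel_eq[of v "sel v"] selp by auto
    have etam[measurable]: "\<eta> t \<in> borel_measurable Pr" for t
      using ind by (simp add: indep_vars_def)
    have thmeas[measurable]: "th \<in> borel_measurable Pr"
      unfolding th_def Z_def by measurable
    have meas: "(\<lambda>\<omega>. rt_regret Bh a sel \<theta> xstar (\<lambda>t. \<eta> t \<omega>) N) \<in> borel_measurable Pr"
      unfolding reg by (subst selx) measurable
    have tb: "\<bar>(xstar - x) \<bullet> \<theta>\<bar> \<le> 2 * \<phi>max" if "norm x \<le> 1" for x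
    proof -
      have "\<bar>(xstar - x) \<bullet> \<theta>\<bar> \<le> norm (xstar - x) * norm \<theta>" by (rule Cauchy_Schwarz_ineq2)
      also have "\<dots> \<le> 2 * \<phi>max"
      proof (rule mult_mono)
        show "norm (xstar - x) \<le> 2" using norm_triangle_ineq4[of xstar x] xs1 that by linarith
      qed (use phmax \<theta>_def in auto)
      finally show ?thesis .
    qed
    have xb: "norm (if t \<le> N2 then a ((t - 1) mod r) else sel (th \<omega>)) \<le> 1" for t \<omega>
      using an selp r0 by (auto simp: r_def)
    have bnd: "\<bar>rt_regret Bh a sel \<theta> xstar (\<lambda>t. \<eta> t \<omega>) N\<bar> \<le> real N * (2 * \<phi>max)" for \<omega>
    proof -
      have "\<bar>rt_regret Bh a sel \<theta> xstar (\<lambda>t. \<eta> t \<omega>) N\<bar>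
         \<le> (\<Sum>t\<in>{1..N}. \<bar>(xstar - (if t \<le> N2 then a ((t - 1) mod r) else sel (th \<omega>))) \<bullet> \<theta>\<bar>)"
        unfolding reg by (rule sum_abs)
      also have "\<dots> \<le> (\<Sum>t\<in>{1..N}. 2 * \<phi>max)" by (intro sum_mono tb xb)
      finally show ?thesis by simp
    qed
    have intg: "integrable Pr (\<lambda>\<omega>. rt_regret Bh a sel \<theta> xstar (\<lambda>t. \<eta> t \<omega>) N)"
      by (rule integrable_const_bound[where B="real N * (2 * \<phi>max)"]) (use bnd meas in auto)
    define W where "W \<omega> = 2 * \<phi>max * real N2 + 2 * real N / \<phi>min * (2 * \<beta>\<^sup>2 + 2 * (\<Sum>i<r. (Z i \<omega>)\<^sup>2 / (n i)\<^sup>2))" for \<omega>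
    have pw: "rt_regret Bh a sel \<theta> xstar (\<lambda>t. \<eta> t \<omega>) N \<le> W \<omega>" for \<omega>
    proof -
      define Q where "Q = (norm (th \<omega> - \<theta>))\<^sup>2"
      have Q0: "0 \<le> 2 * Q / \<phi>min" using assms by (simp add: Q_def)
      have trm: "(xstar - (if t \<le> N2 then a ((t - 1) mod r) else sel (th \<omega>))) \<bullet> \<theta>
          \<le> (if t \<le> N2 then 2 * \<phi>max else 0) + 2 * Q / \<phi>min" for t
      proof (cases "t \<le> N2")
        case True
        then show ?thesis using tb[OF xb[of t \<omega>]] Q0 by simp
      next
        case False
        have "(xstar - sel (th \<omega>)) \<bullet> \<theta> \<le> 2 * Q / \<phi>min"
          unfolding Q_def
          by (rule exploit_bound) (use assms phmin xs1 selp \<theta>_def in auto)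
        then show ?thesis using False by simp
      qed
      have "rt_regret Bh a sel \<theta> xstar (\<lambda>t. \<eta> t \<omega>) N
          \<le> (\<Sum>t\<in>{1..N}. (if t \<le> N2 then 2 * \<phi>max else 0) + 2 * Q / \<phi>min)"
        unfolding reg by (intro sum_mono trm)
      also have "\<dots> = (\<Sum>t\<in>{t\<in>{1..N}. t \<le> N2}. 2 * \<phi>max) + real N * (2 * Q / \<phi>min)"
        by (simp only: sum.distrib sum.inter_filter[OF finite_atLeastAtMost, symmetric]) simp
      also have "\<dots> \<le> 2 * \<phi>max * real N2 + real N * (2 * Q / \<phi>min)"
      proof -
        have "card {t\<in>{1..N}. t \<le> N2} \<le> card {1..N2}" by (intro card_mono) auto
        moreover have "0 \<le> \<phi>max" using assms by simp
        ultimately have "\<phi>max * real (card {t\<in>{1..N}. t \<le> N2}) \<le> \<phi>max * real N2"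
          by (intro mult_left_mono) auto
        then show ?thesis by (simp add: mult.commute)
      qed
      also have "\<dots> \<le> W \<omega>"
      proof -
        have "Q \<le> 2 * \<beta>\<^sup>2 + 2 * (\<Sum>i<r. (Z i \<omega>)\<^sup>2 / (n i)\<^sup>2)"
          using Qb[of \<omega>] by (simp add: Q_def power_divide)
        then have "real N * (2 * Q / \<phi>min) \<le> real N * (2 * (2 * \<beta>\<^sup>2 + 2 * (\<Sum>i<r. (Z i \<omega>)\<^sup>2 / (n i)\<^sup>2)) / \<phi>min)"
          using assms by (intro mult_left_mono divide_right_mono) auto
        also have "real N * (2 * (2 * \<beta>\<^sup>2 + 2 * (\<Sum>i<r. (Z i \<omega>)\<^sup>2 / (n i)\<^sup>2)) / \<phi>min)
            = 2 * real N / \<phi>min * (2 * \<beta>\<^sup>2 + 2 * (\<Sum>i<r. (Z i \<omega>)\<^sup>2 / (n i)\<^sup>2))" by simp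
        finally show ?thesis by (simp add: W_def)
      qed
      finally show ?thesis .
    qed
    have Zint: "integrable Pr (\<lambda>\<omega>. (Z i \<omega>)\<^sup>2) \<and> (\<integral>\<omega>. (Z i \<omega>)\<^sup>2 \<partial>Pr) \<le> 24 * n i" for i
      using noise_sq[OF ps ind mom, of "T i"] by (simp add: Z_def n_def T_def)
    have Wint: "integrable Pr W"
      unfolding W_def using Zint by auto
    have EW: "(\<integral>\<omega>. W \<omega> \<partial>Pr) = 2 * \<phi>max * real N2 + 2 * real N / \<phi>min * (2 * \<beta>\<^sup>2 + 2 * (\<Sum>i<r. (\<integral>\<omega>. (Z i \<omega>)\<^sup>2 \<partial>Pr) / (n i)\<^sup>2))"
      unfolding W_def using Zint by (simp add: integral_sum prob_space)
    have EW2: "(\<integral>\<omega>. W \<omega> \<partial>Pr) \<le> C * (real r * sqrt (real N) + real N * \<epsilon>\<^sup>2)"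
    proof -
      define sq where "sq = sqrt (real N)"
      have sq2: "2 \<le> sq" using sN by (simp add: sq_def)
      have Nsq: "real N = sq * sq" by (simp add: sq_def)
      have zi: "(\<integral>\<omega>. (Z i \<omega>)\<^sup>2 \<partial>Pr) / (n i)\<^sup>2 \<le> 48 / sq" if "i < r" for i
      proof -
        have ni: "0 < n i" "sq / 2 \<le> n i" using npos[OF that] nlo[OF that] by (simp_all add: sq_def)
        have "(\<integral>\<omega>. (Z i \<omega>)\<^sup>2 \<partial>Pr) / (n i)\<^sup>2 \<le> 24 * n i / (n i)\<^sup>2"
          using Zint[of i] ni by (intro divide_right_mono) auto
        also have "\<dots> = 24 / n i" using ni by (simp add: power2_eq_square)
        also have "\<dots> \<le> 24 / (sq / 2)" using ni sq2 by (intro divide_left_mono) auto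
        finally show ?thesis by simp
      qed
      have s1: "(\<Sum>i<r. (\<integral>\<omega>. (Z i \<omega>)\<^sup>2 \<partial>Pr) / (n i)\<^sup>2) \<le> real r * (48 / sq)"
        using sum_mono[of "{..<r}" _ "\<lambda>_. 48 / sq", OF zi] by simp
      have pm: "0 < \<phi>min" "0 \<le> \<phi>max" using assms by auto
      have "(\<integral>\<omega>. W \<omega> \<partial>Pr) \<le> 2 * \<phi>max * (2 * real r * sq) + 2 * real N / \<phi>min * (2 * (\<phi>max\<^sup>2 * \<epsilon>\<^sup>2) + 2 * (real r * (48 / sq)))"
        unfolding EW using N2hi bias s1 pm
        by (intro add_mono mult_left_mono) (auto simp: sq_def)
      also have "\<dots> = (4 * \<phi>max + 192 / \<phi>min) * (real r * sq) + 4 * \<phi>max\<^sup>2 / \<phi>min * (real N * \<epsilon>\<^sup>2)"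
        using sq2 pm by (simp add: Nsq field_simps)
      also have "\<dots> \<le> C * (real r * sq) + C * (real N * \<epsilon>\<^sup>2)"
      proof (rule add_mono)
        have "4 * \<phi>max + 192 / \<phi>min \<le> C" unfolding C_def using pm by simp
        then show "(4 * \<phi>max + 192 / \<phi>min) * (real r * sq) \<le> C * (real r * sq)"
          using sq2 by (intro mult_right_mono) auto
        have "4 * \<phi>max\<^sup>2 / \<phi>min \<le> C" unfolding C_def using pm by simp
        then show "4 * \<phi>max\<^sup>2 / \<phi>min * (real N * \<epsilon>\<^sup>2) \<le> C * (real N * \<epsilon>\<^sup>2)"
          by (intro mult_right_mono) auto
      qed
      finally show ?thesis by (simp add: sq_def distrib_left)
    qed
    have "(\<integral>\<omega>. rt_regret Bh a sel \<theta> xstar (\<lambda>t. \<eta> t \<omega>) N \<partial>Pr) \<le> (\<integral>\<omega>. W \<omega> \<partial>Pr)"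
      by (rule integral_mono[OF intg Wint pw])
    then show "integrable Pr (\<lambda>\<omega>. rt_regret Bh a sel (B *v \<alpha>) xstar (\<lambda>t. \<eta> t \<omega>) N)
        \<and> (\<integral>\<omega>. rt_regret Bh a sel (B *v \<alpha>) xstar (\<lambda>t. \<eta> t \<omega>) N \<partial>Pr)
            \<le> C * (real CARD('r) * sqrt (real N) + real N * \<epsilon>\<^sup>2)"
      using intg EW2 by (simp add: \<theta>_def r_def)
  qed
qed


end
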